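(* Let $p$ be a well-typed Molholes program. Then for every input stream $is=(i_0,i_1,\dots)$ of lists compatible with $\mathsf{inputs}\,p$ (i.e. each $i_j$ is a list whose $n$-th entry is a value of the $n$-th type of $\mathsf{inputs}\,p$), the stream $\mathrm{run}\,p\,(\mathrm{init}\,p)\,is$ is everywhere defined and is a stream $os$ of lists compatible with $\mathsf{outputs}\,p$.
   Context: Host language: types are sets, functions total; products; $\mathsf{Unit}=\{tt\}$. A resource of type $A$ is $\mathsf{Ref}\,A\,n$, $\mathrm{id}=n$. Molholes terms: $\mathsf{Arr}\,f:\mathsf{RSF}\,A\,B$, $\mathsf{Comp}\,t_1\,t_2:\mathsf{RSF}\,A\,C$ ($t_1:\mathsf{RSF}\,A\,B$, $t_2:\mathsf{RSF}\,B\,C$), $\mathsf{First}\,t:\mathsf{RSF}(A\times C)(B\times C)$, $\mathsf{Get}\,r:\mathsf{RSF}\,A(A\times B)$, $\mathsf{Set}\,r:\mathsf{RSF}(A\times B)A$ ($r$ of type $B$). A status is $\mathsf{Internal}$, $\mathsf{Input}\,b$ or $\mathsf{Output}\,b$; a cell is $\mathsf{Cell}(s,\tau)\,x$ with $x$ a value of $\tau$ or $\mathsf{undef}$; a memory is a partial map $\mathbb N\rightharpoonup$ cells. For $r=\mathsf{Ref}\,A\,n$: $\mathrm{read}\,r\,\sigma=(x,\sigma)$ if $\sigma n=\mathsf{Cell}(\mathsf{Internal},A)x$; $=(x,\sigma[n\mapsto\mathsf{Cell}(\mathsf{Input}\,\mathrm{false},A)\mathsf{undef}])$ if $\sigma n=\mathsf{Cell}(\mathsf{Input}\,\mathrm{true},A)x$;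 else undefined. $\mathrm{write}\,r\,\sigma\,v=\sigma[n\mapsto\mathsf{Cell}(\mathsf{Internal},A)v]$ if $\sigma n=\mathsf{Cell}(\mathsf{Internal},A)x$; $=\sigma[n\mapsto\mathsf{Cell}(\mathsf{Output}\,\mathrm{false},A)v]$ if $\sigma n=\mathsf{Cell}(\mathsf{Output}\,\mathrm{true},A)\mathsf{undef}$; else undefined. Semantics $\mathrm{step}\,t:A\to(\text{memory}\rightharpoonup B\times\text{memory})$: $\mathsf{Arr}\,f\mapsto\lambda x\sigma.(fx,\sigma)$; $\mathsf{Comp}\,t_1t_2\mapsto\lambda x\sigma.\mathrm{step}\,t_2\,y\,\sigma'$ with $(y,\sigma')=\mathrm{step}\,t_1\,x\,\sigma$; $\mathsf{First}\,t\mapsto\lambda(x,c)\sigma.((y,c),\sigma')$ with $(y,\sigma')=\mathrm{step}\,t\,x\,\sigma$; $\mathsf{Get}\,r\mapsto\lambda x\sigma.((x,y),\sigma')$ with $(y,\sigma')=\mathrm{read}\,r\,\sigma$; $\mathsf{Set}\,r\mapsto\lambda(x,y)\sigma.(x,\mathrm{write}\,r\,\sigma\,y)$ (all partial). A program $p$ consists of a list $\mathsf{inputs}\,p$ of $k_{in}$ types, a list $\mathsf{internals}\,p$ of $k$ typed values, a list $\mathsf{outputs}\,p$ of $k_{out}$ types, and $\mathsf{program}\,p:\mathsf{RSF}\,\mathsf{Unit}\,\mathsf{Unit}$; input resources have identifiers $0,\dots,k_{in}-1$, internal ones $k_{in},\dots,k_{in}+k-1$, output ones $k_{in}+k,\dots,k_{in}+k+k_{out}-1$,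 with the corresponding types. $\mathrm{init}\,p$ maps internal index $n$ to $\mathsf{Cell}(\mathsf{Internal},\tau)\,v$ where $v:\tau$ is the corresponding entry of $\mathsf{internals}\,p$, undefined elsewhere. $\mathrm{pull}\,p\,\sigma\,i$ maps input index $n$ to $\mathsf{Cell}(\mathsf{Input}\,\mathrm{true},\tau_n)\,i_n$, output index $n$ to $\mathsf{Cell}(\mathsf{Output}\,\mathrm{true},\tau)\,\mathsf{undef}$, and agrees with $\sigma$ elsewhere. $\mathrm{push}\,p\,\sigma$ is the list, in index order, of values $v$ with $\sigma\,n=\mathsf{Cell}(\mathsf{Output}\,\mathrm{false},\tau)\,v$ for output indices $n$. Corecursively, $\mathrm{run}\,p\,\sigma\,(i:is)=(\mathrm{push}\,p\,\sigma'):\mathrm{run}\,p\,\sigma'\,is$ where $(tt,\sigma')=\mathrm{step}(\mathsf{program}\,p)\,tt\,(\mathrm{pull}\,p\,\sigma\,i)$ (undefined if this step is undefined). Well-typedness: an abstract memory $\Sigma$ maps indices to pairs (status, type). For $r=\mathsf{Ref}\,A\,n$: $\mathrm{read}^\dagger r\Sigma=\Sigma$ if $\Sigma n=(\mathsf{Internal},A)$, $=\Sigma[n\mapsto(\mathsf{Input}\,\mathrm{false},A)]$ if $\Sigma n=(\mathsf{Input}\,\mathrm{true},A)$, else undefined; $\mathrm{write}^\dagger r\Sigma=\Sigma$ if $\Sigma n=(\mathsf{Internal},A)$, $=\Sigma[n\mapsto(\mathsf{Output}\,\mathrm{false},A)]$ if $\Sigma n=(\mathsf{Output}\,\mathrm{true},A)$,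 else undefined. $\mathrm{step}^\dagger(\mathsf{Arr}\,f)\Sigma=\Sigma$; $\mathrm{step}^\dagger(\mathsf{First}\,t)=\mathrm{step}^\dagger t$; $\mathrm{step}^\dagger(\mathsf{Comp}\,t_1t_2)\Sigma=\mathrm{step}^\dagger t_2(\mathrm{step}^\dagger t_1\Sigma)$; $\mathrm{step}^\dagger(\mathsf{Get}\,r)=\mathrm{read}^\dagger r$; $\mathrm{step}^\dagger(\mathsf{Set}\,r)=\mathrm{write}^\dagger r$ (partial). $\mathrm{init}^\dagger p$ assigns $(\mathsf{Input}\,\mathrm{true},\tau)$ to input indices, $(\mathsf{Output}\,\mathrm{true},\tau)$ to output indices and $(\mathsf{Internal},\tau)$ to internal indices (with the corresponding types), undefined elsewhere. $p$ is well-typed if $\mathrm{step}^\dagger(\mathsf{program}\,p)(\mathrm{init}^\dagger p)$ is defined and assigns status $\mathsf{Input}\,\mathrm{false}$ to every input index and $\mathsf{Output}\,\mathrm{false}$ to every output index. *)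

theory Defs
  imports Main
begin

text \<open>Host-language values: a universe closed under the unit value and pairing,
  over an arbitrary type of atoms. Host types are sets of values.\<close>

datatype 'a val = VUnit | VPair "'a val" "'a val" | VAtom 'a

type_synonym 'a ty = "'a val set"

definition UnitT :: "'a ty" where
  "UnitT = {VUnit}"

definition ProdT :: "'a ty \<Rightarrow> 'a ty \<Rightarrow> 'a ty" where
  "ProdT A B = {VPair x y | x y. x \<in> A \<and> y \<in> B}"

datatype 'a resource = Ref "'a ty" nat

datatype 'a rsf =
    Arr "'a val \<Rightarrow> 'a val"
  | Comp "'a rsf" "'a rsf"
  | First "'a rsf"
  | Get "'a resource"
  | Set "'a resource"

text \<open>Typing of terms: \<open>wt_rsf t A B\<close> means \<open>t : RSF A B\<close>.\<close>

inductive wt_rsf :: "'a rsf \<Rightarrow> 'a ty \<Rightarrow> 'a ty \<Rightarrow> bool" where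
  wt_Arr: "(\<forall>x\<in>A. f x \<in> B) \<Longrightarrow> wt_rsf (Arr f) A B"
| wt_Comp: "wt_rsf t1 A B \<Longrightarrow> wt_rsf t2 B C \<Longrightarrow> wt_rsf (Comp t1 t2) A C"
| wt_First: "wt_rsf t A B \<Longrightarrow> wt_rsf (First t) (ProdT A C) (ProdT B C)"
| wt_Get: "wt_rsf (Get (Ref R n)) A (ProdT A R)"
| wt_Set: "wt_rsf (Set (Ref R n)) (ProdT A R) A"

datatype status = Internal | Input bool | Output bool

text \<open>\<open>Cell s \<tau> None\<close> is the undefined content \<open>undef\<close>.\<close>
datatype 'a cell = Cell status "'a ty" "'a val option"

type_synonym 'a mem = "nat \<Rightarrow> 'a cell option"

fun mread :: "'a resource \<Rightarrow> 'a mem \<Rightarrow> ('a val \<times> 'a mem) option" where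
  "mread (Ref A n) \<sigma> =
     (case \<sigma> n of
        None \<Rightarrow> None
      | Some (Cell s B x) \<Rightarrow>
          if B = A \<and> s = Internal \<and> x \<noteq> None then Some (the x, \<sigma>)
          else if B = A \<and> s = Input True \<and> x \<noteq> None
            then Some (the x, \<sigma>(n \<mapsto> Cell (Input False) A None))
          else None)"

fun mwrite :: "'a resource \<Rightarrow> 'a mem \<Rightarrow> 'a val \<Rightarrow> 'a mem option" where
  "mwrite (Ref A n) \<sigma> v =
     (case \<sigma> n of
        None \<Rightarrow> None
      | Some (Cell s B x) \<Rightarrow>
          if B = A \<and> s = Internal then Some (\<sigma>(n \<mapsto> Cell Internal A (Some v)))
          else if B = A \<and> s = Output True \<and> x = None
            then Some (\<sigma>(n \<mapsto> Cell (Output False) A (Some v)))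
          else None)"

fun step :: "'a rsf \<Rightarrow> 'a val \<Rightarrow> 'a mem \<Rightarrow> ('a val \<times> 'a mem) option" where
  "step (Arr f) x \<sigma> = Some (f x, \<sigma>)"
| "step (Comp t1 t2) x \<sigma> =
     (case step t1 x \<sigma> of None \<Rightarrow> None | Some (y, \<sigma>') \<Rightarrow> step t2 y \<sigma>')"
| "step (First t) (VPair x c) \<sigma> =
     (case step t x \<sigma> of None \<Rightarrow> None | Some (y, \<sigma>') \<Rightarrow> Some (VPair y c, \<sigma>'))"
| "step (First t) VUnit \<sigma> = None"
| "step (First t) (VAtom a) \<sigma> = None"
| "step (Get r) x \<sigma> =
     (case mread r \<sigma> of None \<Rightarrow> None | Some (y, \<sigma>') \<Rightarrow> Some (VPair x y, \<sigma>'))"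
| "step (Set r) (VPair x y) \<sigma> = map_option (\<lambda>\<sigma>'. (x, \<sigma>')) (mwrite r \<sigma> y)"
| "step (Set r) VUnit \<sigma> = None"
| "step (Set r) (VAtom a) \<sigma> = None"

record 'a prog =
  inputs :: "'a ty list"
  internals :: "('a ty \<times> 'a val) list"
  outputs :: "'a ty list"
  program :: "'a rsf"

definition prog_ok :: "'a prog \<Rightarrow> bool" where
  "prog_ok p \<longleftrightarrow> wt_rsf (program p) UnitT UnitT \<and> (\<forall>(\<tau>, v) \<in> set (internals p). v \<in> \<tau>)"

definition init :: "'a prog \<Rightarrow> 'a mem" where
  "init p n =
     (let kin = length (inputs p); k = length (internals p) in
      if kin \<le> n \<and> n < kin + k
      then Some (Cell Internal (fst (internals p ! (n - kin))) (Some (snd (internals p ! (n - kin)))))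
      else None)"

definition pull :: "'a prog \<Rightarrow> 'a mem \<Rightarrow> 'a val list \<Rightarrow> 'a mem" where
  "pull p \<sigma> i n =
     (let kin = length (inputs p); k = length (internals p); kout = length (outputs p) in
      if n < kin then Some (Cell (Input True) (inputs p ! n) (Some (i ! n)))
      else if kin + k \<le> n \<and> n < kin + k + kout
      then Some (Cell (Output True) (outputs p ! (n - kin - k)) None)
      else \<sigma> n)"

definition push :: "'a prog \<Rightarrow> 'a mem \<Rightarrow> 'a val list" where
  "push p \<sigma> =
     (let kin = length (inputs p); k = length (internals p); kout = length (outputs p) in
      concat (map (\<lambda>n. case \<sigma> n of
                          Some (Cell s \<tau> (Some v)) \<Rightarrow> if s = Output False then [v] else []
                        | _ \<Rightarrow> [])
                  [kin + k ..< kin + k + kout]))"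

text \<open>Streams are modelled as functions \<open>nat \<Rightarrow> _\<close>. \<open>run_state p \<sigma> ins j\<close> is the
  memory after the first \<open>j\<close> reactions (\<open>None\<close> = undefined); \<open>run p \<sigma> ins j\<close> is the
  \<open>j\<close>-th element of the (partial) stream \<open>run p \<sigma> ins\<close>.\<close>
fun run_state :: "'a prog \<Rightarrow> 'a mem \<Rightarrow> (nat \<Rightarrow> 'a val list) \<Rightarrow> nat \<Rightarrow> 'a mem option" where
  "run_state p \<sigma> ins 0 = Some \<sigma>"
| "run_state p \<sigma> ins (Suc j) =
     (case run_state p \<sigma> ins j of
        None \<Rightarrow> None
      | Some \<sigma>0 \<Rightarrow>
          (case step (program p) VUnit (pull p \<sigma>0 (ins j)) of
             None \<Rightarrow> None
           | Some (r, \<sigma>') \<Rightarrow> if r = VUnit then Some \<sigma>' else None))"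

definition run :: "'a prog \<Rightarrow> 'a mem \<Rightarrow> (nat \<Rightarrow> 'a val list) \<Rightarrow> nat \<Rightarrow> 'a val list option" where
  "run p \<sigma> ins j = map_option (push p) (run_state p \<sigma> ins (Suc j))"

type_synonym 'a amem = "nat \<Rightarrow> (status \<times> 'a ty) option"

fun mread_abs :: "'a resource \<Rightarrow> 'a amem \<Rightarrow> 'a amem option" where
  "mread_abs (Ref A n) \<Sigma> =
     (if \<Sigma> n = Some (Internal, A) then Some \<Sigma>
      else if \<Sigma> n = Some (Input True, A) then Some (\<Sigma>(n \<mapsto> (Input False, A)))
      else None)"

fun mwrite_abs :: "'a resource \<Rightarrow> 'a amem \<Rightarrow> 'a amem option" where
  "mwrite_abs (Ref A n) \<Sigma> =
     (if \<Sigma> n = Some (Internal, A) then Some \<Sigma>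
      else if \<Sigma> n = Some (Output True, A) then Some (\<Sigma>(n \<mapsto> (Output False, A)))
      else None)"

fun step_abs :: "'a rsf \<Rightarrow> 'a amem \<Rightarrow> 'a amem option" where
  "step_abs (Arr f) \<Sigma> = Some \<Sigma>"
| "step_abs (First t) \<Sigma> = step_abs t \<Sigma>"
| "step_abs (Comp t1 t2) \<Sigma> = Option.bind (step_abs t1 \<Sigma>) (step_abs t2)"
| "step_abs (Get r) \<Sigma> = mread_abs r \<Sigma>"
| "step_abs (Set r) \<Sigma> = mwrite_abs r \<Sigma>"

definition init_abs :: "'a prog \<Rightarrow> 'a amem" where
  "init_abs p n =
     (let kin = length (inputs p); k = length (internals p); kout = length (outputs p) in
      if n < kin then Some (Input True, inputs p ! n)
      else if n < kin + k then Some (Internal, fst (internals p ! (n - kin)))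
      else if n < kin + k + kout then Some (Output True, outputs p ! (n - kin - k))
      else None)"

definition well_typed :: "'a prog \<Rightarrow> bool" where
  "well_typed p \<longleftrightarrow>
     (\<exists>\<Sigma>. step_abs (program p) (init_abs p) = Some \<Sigma> \<and>
        (\<forall>n < length (inputs p). \<exists>\<tau>. \<Sigma> n = Some (Input False, \<tau>)) \<and>
        (\<forall>n. length (inputs p) + length (internals p) \<le> n \<and>
             n < length (inputs p) + length (internals p) + length (outputs p) \<longrightarrow>
             (\<exists>\<tau>. \<Sigma> n = Some (Output False, \<tau>))))"

definition compatible :: "'a val list \<Rightarrow> 'a ty list \<Rightarrow> bool" where
  "compatible vs ts \<longleftrightarrow> list_all2 (\<lambda>v \<tau>. v \<in> \<tau>) vs ts"

end

theory Submission
  imports Defs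
begin

fun cok :: "status \<Rightarrow> 'a ty \<Rightarrow> 'a val option \<Rightarrow> bool" where
  "cok Internal \<tau> x = (\<exists>v. x = Some v \<and> v \<in> \<tau>)"
| "cok (Input b) \<tau> x = (b \<longrightarrow> (\<exists>v. x = Some v \<and> v \<in> \<tau>))"
| "cok (Output b) \<tau> x = (if b then x = None else (\<exists>v. x = Some v \<and> v \<in> \<tau>))"

definition rel :: "'a amem \<Rightarrow> 'a mem \<Rightarrow> bool" where
  "rel S \<sigma> = (\<forall>n. case S n of None \<Rightarrow> \<sigma> n = None
                 | Some (s, \<tau>) \<Rightarrow> (\<exists>x. \<sigma> n = Some (Cell s \<tau> x) \<and> cok s \<tau> x))"

lemma rel_at: "rel S \<sigma> \<Longrightarrow> S n = Some (s, \<tau>) \<Longrightarrow> \<exists>x. \<sigma> n = Some (Cell s \<tau> x) \<and> cok s \<tau> x"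
  unfolding rel_def by (drule spec[of _ n]) auto

lemma rel_none: "rel S \<sigma> \<Longrightarrow> S n = None \<Longrightarrow> \<sigma> n = None"
  unfolding rel_def by (drule spec[of _ n]) auto

lemma rel_upd:
  assumes "rel S \<sigma>" "cok s \<tau> x"
  shows "rel (S(n \<mapsto> (s, \<tau>))) (\<sigma>(n \<mapsto> Cell s \<tau> x))"
  unfolding rel_def
  apply (intro allI)
  subgoal for m
    using spec[OF assms(1)[unfolded rel_def], of m] assms(2) by (cases "m = n"; cases "S m") auto
  done

lemma read_ok:
  assumes "rel S \<sigma>" "mread_abs (Ref R n) S = Some S'"
  shows "\<exists>y \<sigma>'. mread (Ref R n) \<sigma> = Some (y, \<sigma>') \<and> y \<in> R \<and> rel S' \<sigma>'"
proof (cases "S n = Some (Internal, R)")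
  case True
  then obtain x where "\<sigma> n = Some (Cell Internal R x)" "cok Internal R x" using rel_at assms(1) by blast
  then show ?thesis using assms True by auto
next
  case False
  then have S: "S n = Some (Input True, R)" "S' = S(n \<mapsto> (Input False, R))"
    using assms(2) by (auto split: if_splits)
  then obtain x where "\<sigma> n = Some (Cell (Input True) R x)" "cok (Input True) R x" using rel_at assms(1) by blast
  then show ?thesis using assms S rel_upd[OF assms(1), of "Input False" R None n] by auto
qed

lemma write_ok:
  assumes "rel S \<sigma>" "mwrite_abs (Ref R n) S = Some S'" "v \<in> R"
  shows "\<exists>\<sigma>'. mwrite (Ref R n) \<sigma> v = Some \<sigma>' \<and> rel S' \<sigma>'"
proof (cases "S n = Some (Internal, R)")
  case True
  then obtain x where "\<sigma> n = Some (Cell Internal R x)" "cok Internal R x" using rel_at assms(1) by blast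
  moreover have "S(n \<mapsto> (Internal, R)) = S" using True by auto
  ultimately show ?thesis using assms True rel_upd[OF assms(1), of Internal R "Some v" n] by auto
next
  case False
  then have S: "S n = Some (Output True, R)" "S' = S(n \<mapsto> (Output False, R))"
    using assms(2) by (auto split: if_splits)
  then obtain x where "\<sigma> n = Some (Cell (Output True) R x)" "cok (Output True) R x" using rel_at assms(1) by blast
  then show ?thesis using assms S rel_upd[OF assms(1), of "Output False" R "Some v" n] by auto
qed

lemma step_ok:
  "wt_rsf t A B \<Longrightarrow> x \<in> A \<Longrightarrow> rel S \<sigma> \<Longrightarrow> step_abs t S = Some S' \<Longrightarrow>
   \<exists>y \<sigma>'. step t x \<sigma> = Some (y, \<sigma>') \<and> y \<in> B \<and> rel S' \<sigma>'"
proof (induction t A B arbitrary: x S \<sigma> S' rule: wt_rsf.induct)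
  case (wt_Arr A f B)
  then show ?case by auto
next
  case (wt_Comp t1 A B t2 C)
  from wt_Comp.prems obtain S1 where S1: "step_abs t1 S = Some S1" "step_abs t2 S1 = Some S'"
    by (cases "step_abs t1 S") auto
  from wt_Comp.IH(1)[OF wt_Comp.prems(1,2) S1(1)] obtain y \<sigma>1 where
    a: "step t1 x \<sigma> = Some (y, \<sigma>1)" "y \<in> B" "rel S1 \<sigma>1" by blast
  from wt_Comp.IH(2)[OF a(2,3) S1(2)] a(1) show ?case by auto
next
  case (wt_First t A B C)
  then obtain a c where x: "x = VPair a c" "a \<in> A" "c \<in> C" by (auto simp: ProdT_def)
  from wt_First.IH[OF x(2) wt_First.prems(2)] wt_First.prems(3) obtain y \<sigma>1 where
    "step t a \<sigma> = Some (y, \<sigma>1)" "y \<in> B" "rel S' \<sigma>1" by auto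
  then show ?case using x by (auto simp: ProdT_def)
next
  case (wt_Get R n A)
  from read_ok[OF wt_Get.prems(2) wt_Get.prems(3)[unfolded step_abs.simps]] obtain y \<sigma>' where
    "mread (Ref R n) \<sigma> = Some (y, \<sigma>')" "y \<in> R" "rel S' \<sigma>'" by auto
  then show ?case using wt_Get.prems(1) by (auto simp: ProdT_def)
next
  case (wt_Set R n A)
  then obtain a b where x: "x = VPair a b" "a \<in> A" "b \<in> R" by (auto simp: ProdT_def)
  from write_ok[OF wt_Set.prems(2) wt_Set.prems(3)[unfolded step_abs.simps] x(3)] obtain \<sigma>' where
    "mwrite (Ref R n) \<sigma> b = Some \<sigma>'" "rel S' \<sigma>'" by auto
  then show ?case using x by auto
qed

lemma step_abs_pres:
  "step_abs t S = Some S' \<Longrightarrow> (S n = None \<longrightarrow> S' n = None) \<and> (S n = Some (Internal, \<tau>) \<longrightarrow> S' n = Some (Internal, \<tau>))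
    \<and> (S n = Some (s, \<tau>) \<longrightarrow> (\<exists>s'. S' n = Some (s', \<tau>)))"
proof (induction t arbitrary: S S' s)
  case (Comp t1 t2)
  then obtain S1 where 1: "step_abs t1 S = Some S1" and 2: "step_abs t2 S1 = Some S'"
    by (cases "step_abs t1 S") auto
  show ?case using Comp.IH(1)[OF 1] Comp.IH(2)[OF 2] by blast
next
  case (Get r)
  then show ?case by (cases r) (auto split: if_splits)
next
  case (Set r)
  then show ?case by (cases r) (auto split: if_splits)
qed auto

definition Inv :: "'a prog \<Rightarrow> 'a mem \<Rightarrow> bool" where
  "Inv p \<sigma> = ((\<forall>n. length (inputs p) \<le> n \<and> n < length (inputs p) + length (internals p) \<longrightarrow>
       (\<exists>v. \<sigma> n = Some (Cell Internal (fst (internals p ! (n - length (inputs p)))) (Some v))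
          \<and> v \<in> fst (internals p ! (n - length (inputs p))))) \<and>
     (\<forall>n. length (inputs p) + length (internals p) + length (outputs p) \<le> n \<longrightarrow> \<sigma> n = None))"


lemma Inv_init: "prog_ok p \<Longrightarrow> Inv p (init p)"
proof -
  assume ok: "prog_ok p"
  have "\<forall>n. length (inputs p) \<le> n \<and> n < length (inputs p) + length (internals p) \<longrightarrow>
       snd (internals p ! (n - length (inputs p))) \<in> fst (internals p ! (n - length (inputs p)))"
  proof (intro allI impI)
    fix n assume b: "length (inputs p) \<le> n \<and> n < length (inputs p) + length (internals p)"
    then have "internals p ! (n - length (inputs p)) \<in> set (internals p)" by auto
    then show "snd (internals p ! (n - length (inputs p))) \<in> fst (internals p ! (n - length (inputs p)))"
      using ok unfolding prog_ok_def by (metis (mono_tags, lifting) case_prodE prod.sel)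
  qed
  then show ?thesis unfolding Inv_def init_def Let_def by auto
qed

lemma rel_pull:
  assumes "Inv p \<sigma>" "compatible i (inputs p)"
  shows "rel (init_abs p) (pull p \<sigma> i)"
  unfolding rel_def
proof
  fix n
  have len: "length i = length (inputs p)" and el: "\<And>m. m < length i \<Longrightarrow> i ! m \<in> inputs p ! m"
    using assms(2) unfolding compatible_def list_all2_conv_all_nth by auto
  show "case init_abs p n of None \<Rightarrow> pull p \<sigma> i n = None
          | Some (s, \<tau>) \<Rightarrow> \<exists>x. pull p \<sigma> i n = Some (Cell s \<tau> x) \<and> cok s \<tau> x"
  proof (cases "n < length (inputs p)")
    case True then show ?thesis using el len by (auto simp: init_abs_def pull_def)
  next
    case F1: False
    show ?thesis
    proof (cases "n < length (inputs p) + length (internals p)")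
      case True
      then obtain v where "\<sigma> n = Some (Cell Internal (fst (internals p ! (n - length (inputs p)))) (Some v))"
          "v \<in> fst (internals p ! (n - length (inputs p)))"
        using F1 assms(1) True unfolding Inv_def by (meson not_le)
      then show ?thesis using F1 True by (auto simp: init_abs_def pull_def)
    next
      case False then show ?thesis using F1 assms(1) unfolding Inv_def
        by (auto simp: init_abs_def pull_def Let_def)
    qed
  qed
qed

lemma concat_single: "(\<And>n. n \<in> set xs \<Longrightarrow> f n = [g n]) \<Longrightarrow> concat (map f xs) = map g xs"
  by (induction xs) auto

lemma final:
  assumes wt: "well_typed p" and ok: "prog_ok p" and I: "Inv p \<sigma>" and c: "compatible i (inputs p)"
  shows "\<exists>\<sigma>'. step (program p) VUnit (pull p \<sigma> i) = Some (VUnit, \<sigma>') \<and> Inv p \<sigma>'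
     \<and> compatible (push p \<sigma>') (outputs p)"
proof -
  obtain S where S: "step_abs (program p) (init_abs p) = Some S"
    and So: "\<forall>n. length (inputs p) + length (internals p) \<le> n \<and>
             n < length (inputs p) + length (internals p) + length (outputs p) \<longrightarrow>
             (\<exists>\<tau>. S n = Some (Output False, \<tau>))"
    using wt unfolding well_typed_def by blast
  have wtp: "wt_rsf (program p) UnitT UnitT" using ok unfolding prog_ok_def by auto
  from step_ok[OF wtp _ rel_pull[OF I c] S] obtain y \<sigma>' where
    st: "step (program p) VUnit (pull p \<sigma> i) = Some (y, \<sigma>')" "y \<in> UnitT" "rel S \<sigma>'"
    by (auto simp: UnitT_def)
  have y: "y = VUnit" using st(2) by (simp add: UnitT_def)
  have inv': "Inv p \<sigma>'"
    unfolding Inv_def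
  proof (intro conjI allI impI)
    fix n assume "length (inputs p) \<le> n \<and> n < length (inputs p) + length (internals p)"
    then have "init_abs p n = Some (Internal, fst (internals p ! (n - length (inputs p))))"
      by (auto simp: init_abs_def)
    then have Sn: "S n = Some (Internal, fst (internals p ! (n - length (inputs p))))"
      using step_abs_pres[OF S] by blast
    show "\<exists>v. \<sigma>' n = Some (Cell Internal (fst (internals p ! (n - length (inputs p)))) (Some v))
          \<and> v \<in> fst (internals p ! (n - length (inputs p)))"
      using rel_at[OF st(3) Sn] by auto
  next
    fix n assume "length (inputs p) + length (internals p) + length (outputs p) \<le> n"
    then have "init_abs p n = None" by (auto simp: init_abs_def)
    then have "S n = None" using step_abs_pres[OF S] by blast
    then show "\<sigma>' n = None" using rel_none[OF st(3)] by blast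
  qed
  define kk where "kk = length (inputs p) + length (internals p)"
  define g where "g n = (case \<sigma>' n of Some (Cell s \<tau> (Some v)) \<Rightarrow> v | _ \<Rightarrow> undefined)" for n
  have out: "\<exists>v. \<sigma>' n = Some (Cell (Output False) (outputs p ! (n - kk)) (Some v)) \<and> v \<in> outputs p ! (n - kk)"
    if "kk \<le> n" "n < kk + length (outputs p)" for n
  proof -
    have "init_abs p n = Some (Output True, outputs p ! (n - kk))"
      using that by (auto simp: init_abs_def kk_def)
    then obtain s where s: "S n = Some (s, outputs p ! (n - kk))" using step_abs_pres[OF S] by blast
    moreover have "\<exists>\<tau>. S n = Some (Output False, \<tau>)" using So that kk_def by simp
    then obtain \<tau> where "S n = Some (Output False, \<tau>)" by blast
    ultimately have "S n = Some (Output False, outputs p ! (n - kk))" by simp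
    then have "\<exists>x. \<sigma>' n = Some (Cell (Output False) (outputs p ! (n - kk)) x) \<and> cok (Output False) (outputs p ! (n - kk)) x"
      by (rule rel_at[OF st(3)])
    then show ?thesis by auto
  qed
  have push: "push p \<sigma>' = map g [kk..<kk + length (outputs p)]"
    unfolding push_def Let_def kk_def[symmetric]
  proof (rule concat_single)
    fix n assume "n \<in> set [kk..<kk + length (outputs p)]"
    then obtain v where "\<sigma>' n = Some (Cell (Output False) (outputs p ! (n - kk)) (Some v))"
      using out[of n] \<open>n \<in> set [kk..<kk + length (outputs p)]\<close> by auto
    then show "(case \<sigma>' n of Some (Cell s \<tau> (Some v)) \<Rightarrow> if s = Output False then [v] else [] | _ \<Rightarrow> []) = [g n]"
      by (simp add: g_def)
  qed
  have "compatible (push p \<sigma>') (outputs p)"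
    unfolding push compatible_def list_all2_conv_all_nth
  proof (intro conjI allI impI)
    fix m assume "m < length (map g [kk..<kk + length (outputs p)])"
    then have m: "m < length (outputs p)" by simp
    from out[of "kk + m"] m obtain v where
      "\<sigma>' (kk + m) = Some (Cell (Output False) (outputs p ! m) (Some v))" "v \<in> outputs p ! m" by auto
    then show "map g [kk..<kk + length (outputs p)] ! m \<in> outputs p ! m"
      using m by (simp add: g_def)
  qed simp
  then show ?thesis using st(1) y inv' by blast
qed

lemma run_inv:
  assumes "well_typed p" "prog_ok p" "\<forall>j. compatible (ins j) (inputs p)"
  shows "\<exists>\<sigma>. run_state p (init p) ins j = Some \<sigma> \<and> Inv p \<sigma>"
proof (induction j)
  case 0
  then show ?case using Inv_init[OF assms(2)] by simp
next
  case (Suc j)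
  then obtain \<sigma> where "run_state p (init p) ins j = Some \<sigma>" "Inv p \<sigma>" by blast
  then obtain \<sigma>' where "step (program p) VUnit (pull p \<sigma> (ins j)) = Some (VUnit, \<sigma>')" "Inv p \<sigma>'"
    using final[OF assms(1,2) _ spec[OF assms(3), of j]] by blast
  then show ?case using \<open>run_state p (init p) ins j = Some \<sigma>\<close> by simp
qed

theorem corollary1:
  fixes p :: "'a prog" and ins :: "nat \<Rightarrow> 'a val list"
  assumes "prog_ok p"
    and "well_typed p"
    and "\<forall>j. compatible (ins j) (inputs p)"
  shows "\<forall>j. \<exists>os. run p (init p) ins j = Some os \<and> compatible os (outputs p)"
proof
  fix j
  obtain \<sigma> where s: "run_state p (init p) ins j = Some \<sigma>" "Inv p \<sigma>"
    using run_inv[OF assms(2,1,3)] by blast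
  from final[OF assms(2,1) s(2) spec[OF assms(3), of j]] obtain \<sigma>' where
    "step (program p) VUnit (pull p \<sigma> (ins j)) = Some (VUnit, \<sigma>')" "compatible (push p \<sigma>') (outputs p)"
    by blast
  then show "\<exists>os. run p (init p) ins j = Some os \<and> compatible os (outputs p)"
    using s(1) unfolding run_def by simp
qed

end
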